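(* In the setting of the context, the contamination of $\widehat{\boldsymbol\alpha}_{2,\mathsf{real}}$ satisfies $$\mathsf{CN}_r(t)=\sqrt{\mathbf z_t^\top\mathbf C\,\mathbf z_t}=|1-\mathsf{SU}_r(t)|\sqrt{\mathbf z_t^\top\widetilde{\mathbf C}\,\mathbf z_t},$$ where $\mathbf C=\mathbf A^{-1}\big(\sum_{j\ne t}\lambda_j^2\mathbf z_j\mathbf z_j^\top\big)\mathbf A^{-1}$ and $\widetilde{\mathbf C}=\mathbf A_{-t}^{-1}\big(\sum_{j\ne t}\lambda_j^2\mathbf z_j\mathbf z_j^\top\big)\mathbf A_{-t}^{-1}$.
   Context: Setting: $d\ge n$, $\lambda_1,\dots,\lambda_d>0$; $\mathbf z_1,\dots,\mathbf z_d$ i.i.d. $\mathcal N(\mathbf0,\mathbf I_n)$; $\boldsymbol\Phi_{\mathsf{train}}=[\sqrt{\lambda_1}\mathbf z_1,\dots,\sqrt{\lambda_d}\mathbf z_d]$ (rows i.i.d. $\mathcal N(\mathbf0,\mathrm{diag}(\lambda))$); $\mathbf A=\sum_j\lambda_j\mathbf z_j\mathbf z_j^\top$, $\mathbf A_{-t}=\sum_{j\ne t}\lambda_j\mathbf z_j\mathbf z_j^\top$. Target $\boldsymbol\alpha^*=\mathbf e_t/\sqrt{\lambda_t}$, so the real outputs are $\mathbf Z_{\mathsf{train}}=\mathbf z_t$. $\widehat{\boldsymbol\alpha}_{2,\mathsf{real}}$ is the minimum-$\ell_2$-norm solution of $\boldsymbol\Phi_{\mathsf{train}}\boldsymbol\alpha=\mathbf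 z_t$; $\mathsf{SU}_r(t)=\sqrt{\lambda_t}(\widehat{\boldsymbol\alpha}_{2,\mathsf{real}})_t$, $\mathsf{CN}_r(t)=\sqrt{\sum_{j\ne t}\lambda_j(\widehat{\boldsymbol\alpha}_{2,\mathsf{real}})_j^2}$. *)

theory Defs
  imports "HOL-Analysis.Analysis"
begin

text \<open>Vectors in R^n are real^'n, R^d are real^'d; n = CARD('n), d = CARD('d).\<close>

definition outer :: "real^'n \<Rightarrow> real^'n \<Rightarrow> real^'n^'n" where
  "outer u v = (\<chi> i k. u $ i * v $ k)"

definition Phi :: "('d \<Rightarrow> real) \<Rightarrow> ('d \<Rightarrow> real^'n) \<Rightarrow> real^'d^'n" where
  "Phi lam z = (\<chi> i j. sqrt (lam j) * z j $ i)"

definition gram :: "nat \<Rightarrow> ('d \<Rightarrow> real) \<Rightarrow> ('d \<Rightarrow> real^'n) \<Rightarrow> 'd set \<Rightarrow> real^'n^'n" where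
  "gram p lam z S = (\<Sum>j\<in>S. (lam j ^ p) *\<^sub>R outer (z j) (z j))"

definition min_norm_sol :: "real^'d^'n \<Rightarrow> real^'n \<Rightarrow> real^'d \<Rightarrow> bool" where
  "min_norm_sol M y a \<longleftrightarrow> M *v a = y \<and> (\<forall>b. M *v b = y \<longrightarrow> norm a \<le> norm b)"

definition SU_r :: "('d \<Rightarrow> real) \<Rightarrow> real^'d \<Rightarrow> 'd \<Rightarrow> real" where
  "SU_r lam a t = sqrt (lam t) * a $ t"

definition CN_r :: "('d \<Rightarrow> real) \<Rightarrow> real^'d \<Rightarrow> 'd \<Rightarrow> real" where
  "CN_r lam a t = sqrt (\<Sum>j\<in>UNIV - {t}. lam j * (a $ j)^2)"

end

theory Submission
  imports Defs
begin

lemma sc_inner: "((c::real) *\<^sub>R (x::real^'n)) \<bullet> (c *\<^sub>R y) = c * (c * (x \<bullet> y))"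
  by simp

lemma gram_mv: "gram p lam z S *v x = (\<Sum>j\<in>S. (lam j ^ p * (z j \<bullet> x)) *\<^sub>R z j)"
  unfolding vec_eq_iff
proof (rule allI)
  fix i
  have "(gram p lam z S *v x) $ i = (\<Sum>k\<in>UNIV. (\<Sum>j\<in>S. lam j ^ p * (z j $ i * z j $ k)) * x $ k)"
    unfolding gram_def outer_def matrix_vector_mult_def by simp
  also have "\<dots> = (\<Sum>k\<in>UNIV. \<Sum>j\<in>S. lam j ^ p * (z j $ i * z j $ k) * x $ k)"
    by (simp only: sum_distrib_right)
  also have "\<dots> = (\<Sum>j\<in>S. \<Sum>k\<in>UNIV. lam j ^ p * (z j $ i * z j $ k) * x $ k)"
    by (rule sum.swap)
  also have "\<dots> = (\<Sum>j\<in>S. (lam j ^ p * (z j \<bullet> x)) * z j $ i)"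
  proof (rule sum.cong)
    fix j
    have "(\<Sum>k\<in>UNIV. lam j ^ p * (z j $ i * z j $ k) * x $ k) = (\<Sum>k\<in>UNIV. (lam j ^ p * z j $ i) * (z j $ k * x $ k))"
      by (rule sum.cong) (simp_all only: mult.assoc mult.left_commute)
    also have "\<dots> = (lam j ^ p * z j $ i) * (z j \<bullet> x)"
      unfolding inner_vec_def inner_real_def sum_distrib_left ..
    finally show "(\<Sum>k\<in>UNIV. lam j ^ p * (z j $ i * z j $ k) * x $ k) = (lam j ^ p * (z j \<bullet> x)) * z j $ i"
      by (simp only: mult.assoc mult.commute mult.left_commute)
  qed simp
  also have "\<dots> = (\<Sum>j\<in>S. (lam j ^ p * (z j \<bullet> x)) *\<^sub>R z j) $ i"
    by simp
  finally show "(gram p lam z S *v x) $ i = (\<Sum>j\<in>S. (lam j ^ p * (z j \<bullet> x)) *\<^sub>R z j) $ i" .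
qed

lemma Phi_mv: "Phi lam z *v b = (\<Sum>j\<in>UNIV. (sqrt (lam j) * b$j) *\<^sub>R z j)"
  unfolding Phi_def
  by (simp add: vec_eq_iff matrix_vector_mult_def mult_ac)

lemma PhiT_mv: "transpose (Phi lam z) *v w = (\<chi> j. sqrt (lam j) * (z j \<bullet> w))"
  unfolding Phi_def
  by (simp add: vec_eq_iff matrix_vector_mult_def transpose_def inner_vec_def sum_distrib_left mult_ac)

lemma gram_sym: "transpose (gram p lam z S) = gram p lam z S"
  unfolding gram_def outer_def
  by (simp add: vec_eq_iff transpose_def mult_ac)

lemma inv_props: assumes "invertible M" shows "M ** matrix_inv M = mat 1" "matrix_inv M ** M = mat 1"
  using someI_ex[OF assms[unfolded invertible_def]] unfolding matrix_inv_def by auto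

lemma inv_sym:
  fixes M :: "real^'n^'n"
  assumes "invertible M" "transpose M = M" shows "transpose (matrix_inv M) = matrix_inv M"
proof -
  let ?X = "matrix_inv M"
  have XM: "?X ** M = mat 1" by (rule inv_props(2)[OF assms(1)])
  have "transpose (?X ** M) = mat 1" unfolding XM by (rule transpose_mat)
  hence "transpose M ** transpose ?X = mat 1" unfolding matrix_transpose_mul .
  hence 2: "M ** transpose ?X = mat 1" unfolding assms(2) .
  have "?X = ?X ** (M ** transpose ?X)" unfolding 2 by (rule matrix_mul_rid[symmetric])
  also have "\<dots> = (?X ** M) ** transpose ?X" by (rule matrix_mul_assoc)
  also have "\<dots> = transpose ?X" unfolding XM by (rule matrix_mul_lid)
  finally show ?thesis by (rule sym)
qed

theorem lemma10:
  fixes lam :: "'d::finite \<Rightarrow> real" and z :: "'d \<Rightarrow> real^'n::finite"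
    and t :: 'd and a :: "real^'d"
  assumes "CARD('n) \<le> CARD('d)"
    and "\<forall>j. lam j > 0"
    and "invertible (gram 1 lam z UNIV)"
    and "invertible (gram 1 lam z (UNIV - {t}))"
    and "min_norm_sol (Phi lam z) (z t) a"
  shows "CN_r lam a t =
           sqrt (z t \<bullet> ((matrix_inv (gram 1 lam z UNIV) ** gram 2 lam z (UNIV - {t})
                           ** matrix_inv (gram 1 lam z UNIV)) *v z t))
       \<and> CN_r lam a t =
           \<bar>1 - SU_r lam a t\<bar> *
           sqrt (z t \<bullet> ((matrix_inv (gram 1 lam z (UNIV - {t})) ** gram 2 lam z (UNIV - {t})
                           ** matrix_inv (gram 1 lam z (UNIV - {t}))) *v z t))"
proof -
  define A where "A = gram 1 lam z UNIV"
  define B where "B = gram 1 lam z (UNIV - {t})"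
  define G where "G = gram 2 lam z (UNIV - {t})"
  define P where "P = Phi lam z"
  define w where "w = matrix_inv A *v z t"
  define a0 where "a0 = transpose P *v w"
  have iA: "A ** matrix_inv A = mat 1" "matrix_inv A ** A = mat 1"
    using inv_props assms(3) A_def by auto
  have iB: "B ** matrix_inv B = mat 1" "matrix_inv B ** B = mat 1"
    using inv_props assms(4) B_def by auto
  have sA: "transpose (matrix_inv A) = matrix_inv A"
    using inv_sym assms(3) gram_sym A_def by metis
  have sB: "transpose (matrix_inv B) = matrix_inv B"
    using inv_sym assms(4) gram_sym B_def by metis
  have Aw: "A *v w = z t"
    unfolding w_def by (simp add: matrix_vector_mul_assoc iA)
  have a0c: "a0 $ j = sqrt (lam j) * (z j \<bullet> w)" for j
    unfolding a0_def P_def PhiT_mv by simp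
  have labs: "\<bar>lam j\<bar> = lam j" for j
    using assms(2) by (simp add: abs_of_pos)
  have lamsq: "sqrt (lam j) * (sqrt (lam j) * x) = lam j * x" for j x
    by (simp add: mult.assoc[symmetric] labs)
  have Pa0: "P *v a0 = z t"
  proof -
    have "P *v a0 = (\<Sum>j\<in>UNIV. (lam j ^ 1 * (z j \<bullet> w)) *\<^sub>R z j)"
      unfolding P_def Phi_mv a0c
      by (rule sum.cong) (simp_all add: lamsq)
    also have "\<dots> = A *v w" unfolding A_def gram_mv ..
    finally show ?thesis using Aw by simp
  qed
  have ortho: "a0 \<bullet> c = w \<bullet> (P *v c)" for c
    unfolding a0_def transpose_matrix_vector dot_lmul_matrix ..
  have Pa: "P *v a = z t" and amin: "norm a \<le> norm a0"
    using assms(5) Pa0 unfolding min_norm_sol_def P_def by auto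
  have "a0 \<bullet> (a - a0) = 0"
    using ortho[of "a - a0"] Pa Pa0 by (simp add: matrix_vector_mult_diff_distrib)
  hence "norm a ^ 2 = norm a0 ^ 2 + norm (a - a0) ^ 2"
    using dot_norm[of a0 "a - a0"] by simp
  moreover have "norm a ^ 2 \<le> norm a0 ^ 2"
    using amin by (simp add: power_mono)
  ultimately have "norm (a - a0) ^ 2 \<le> 0" by linarith
  hence aeq: "a = a0" by simp
  have CN2: "CN_r lam a t = sqrt (w \<bullet> (G *v w))"
  proof -
    have "w \<bullet> (G *v w) = (\<Sum>j\<in>UNIV - {t}. lam j ^ 2 * (z j \<bullet> w) * (z j \<bullet> w))"
      unfolding G_def gram_mv by (simp add: inner_sum_right inner_commute mult_ac)
    also have "\<dots> = (\<Sum>j\<in>UNIV - {t}. lam j * (a $ j)^2)"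
    proof (rule sum.cong)
      fix j
      have "lam j * (a $ j)^2 = lam j * (sqrt (lam j) * (sqrt (lam j) * ((z j \<bullet> w) * (z j \<bullet> w))))"
        unfolding aeq a0c power2_eq_square by (simp only: mult_ac)
      also have "\<dots> = lam j ^ 2 * (z j \<bullet> w) * (z j \<bullet> w)"
        unfolding lamsq by (simp add: power2_eq_square)
      finally show "lam j ^ 2 * (z j \<bullet> w) * (z j \<bullet> w) = lam j * (a $ j)^2" by simp
    qed simp
    finally show ?thesis unfolding CN_r_def by simp
  qed
  have first: "z t \<bullet> ((matrix_inv A ** G ** matrix_inv A) *v z t) = w \<bullet> (G *v w)"
  proof -
    have "z t \<bullet> ((matrix_inv A ** G ** matrix_inv A) *v z t) = z t \<bullet> (matrix_inv A *v (G *v w))"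
      unfolding w_def by (simp add: matrix_vector_mul_assoc matrix_mul_assoc)
    also have "\<dots> = (transpose (matrix_inv A) *v z t) \<bullet> (G *v w)"
      by (simp add: dot_lmul_matrix)
    also have "\<dots> = w \<bullet> (G *v w)" unfolding sA w_def ..
    finally show ?thesis .
  qed
  define SU where "SU = SU_r lam a t"
  have SUe: "SU = lam t * (z t \<bullet> w)"
    unfolding SU_def SU_r_def aeq a0c lamsq ..
  have Asplit: "A *v w = B *v w + (lam t * (z t \<bullet> w)) *\<^sub>R z t"
    unfolding A_def B_def gram_mv
    by (simp add: sum.remove[of UNIV t] add.commute)
  have Bw: "B *v w = (1 - SU) *\<^sub>R z t"
    using Asplit Aw SUe by (simp add: algebra_simps)
  define u where "u = matrix_inv B *v z t"
  have wu: "w = (1 - SU) *\<^sub>R u"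
  proof -
    have "w = matrix_inv B *v (B *v w)" by (simp add: matrix_vector_mul_assoc iB)
    thus ?thesis unfolding Bw u_def by (simp add: matrix_vector_mult_scaleR)
  qed
  have second: "z t \<bullet> ((matrix_inv B ** G ** matrix_inv B) *v z t) = u \<bullet> (G *v u)"
  proof -
    have "z t \<bullet> ((matrix_inv B ** G ** matrix_inv B) *v z t) = z t \<bullet> (matrix_inv B *v (G *v u))"
      unfolding u_def by (simp add: matrix_vector_mul_assoc matrix_mul_assoc)
    also have "\<dots> = (transpose (matrix_inv B) *v z t) \<bullet> (G *v u)"
      by (simp add: dot_lmul_matrix)
    also have "\<dots> = u \<bullet> (G *v u)" unfolding sB u_def ..
    finally show ?thesis .
  qed
  have e1: "w \<bullet> (G *v w) = (1 - SU) * ((1 - SU) * (u \<bullet> (G *v u)))"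
  proof -
    have m: "G *v ((1 - SU) *\<^sub>R u) = (1 - SU) *\<^sub>R (G *v u)"
      by (rule matrix_vector_mult_scaleR)
    have "w \<bullet> (G *v w) = ((1 - SU) *\<^sub>R u) \<bullet> ((1 - SU) *\<^sub>R (G *v u))"
      by (simp only: wu m)
    also have "\<dots> = (1 - SU) * ((1 - SU) * (u \<bullet> (G *v u)))"
      by (rule sc_inner)
    finally show ?thesis .
  qed
  have "sqrt (w \<bullet> (G *v w)) = sqrt ((1 - SU)^2 * (u \<bullet> (G *v u)))"
    unfolding e1 power2_eq_square mult.assoc ..
  also have "\<dots> = sqrt ((1 - SU)^2) * sqrt (u \<bullet> (G *v u))"
    by (rule real_sqrt_mult)
  also have "\<dots> = \<bar>1 - SU\<bar> * sqrt (u \<bullet> (G *v u))"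
    unfolding real_sqrt_abs ..
  finally have sq: "sqrt (w \<bullet> (G *v w)) = \<bar>1 - SU\<bar> * sqrt (u \<bullet> (G *v u))" .
  have c1: "CN_r lam a t = sqrt (z t \<bullet> ((matrix_inv A ** G ** matrix_inv A) *v z t))"
    unfolding first by (rule CN2)
  have c2: "CN_r lam a t = \<bar>1 - SU\<bar> * sqrt (z t \<bullet> ((matrix_inv B ** G ** matrix_inv B) *v z t))"
    unfolding second using CN2 sq by (rule trans)
  from c1 c2 show ?thesis unfolding A_def B_def G_def SU_def by (rule conjI)
qed

end
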